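(* Consider the altruistic planner's one-step (myopic) problem described in the context: for each public belief $b\in[0,1]$, maximize $r_A(b,q)=-\beta(q)-C\min(b,1-b,1-q)$ over $q\in[0.5,1]$. Define $$t_M=\begin{cases}\frac{\beta(1)}{C}, & \beta(1)<C(1-p),\\ 0.5, & \text{otherwise.}\end{cases}$$ Then the optimal myopic altruistic policy $\pi^0_A$ (a function with $\pi^0_A(b)\in\arg\sup_{q\in[0.5,1]} r_A(b,q)$ for every $b\in[0,1]$) is given by $$\pi^0_A(b)=\begin{cases}1, & b\in(t_M,1-t_M),\\ p, & \text{otherwise.}\end{cases}$$
   Context: Sequential social learning model: a binary state $\omega\in\{G,B\}$ is drawn once with $\mathbb{P}(\omega=G)=b_1$. Agents $i=1,2,\dots$ act in sequence. Before agent $i$ acts, a planner chooses a signal precision $q_i\in[0.5,1]$; agent $i$ receives a private binary signal $s_i\in\{G,B\}$ with $\mathbb{P}(s_i=\omega)=q_i$, signals being conditionally independent given $\omega$. Given the public belief $b_i$ (probability of $G$ given past precisions and actions), agent $i$ chooses $a_i=s_i$ if $1-q_i\le b_i\le q_i$, $a_i=G$ if $b_i>q_i$, and $a_i=B$ if $b_i<1-q_i$. An agent whose action differs from $\omega$ incurs cost $C>0$; the probability of this is $\min(b_i,1-b_i,1-q_i)$. The altruistic planner has a baseline precision $p\in[0.5,1)$ and a precision-cost function $\beta:[0.5,1]\to[0,\infty)$ that is non-negative, increasing, continuous and concave with $\beta(p)=0$. Its instantaneous reward for choosing precision $q$ at public belief $b$ is $r_A(b,q)=-\beta(q)-C\min(b,1-b,1-q)$.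 *)

theory Defs
  imports "HOL-Analysis.Analysis"
begin

definition r_A :: "(real \<Rightarrow> real) \<Rightarrow> real \<Rightarrow> real \<Rightarrow> real \<Rightarrow> real" where
  "r_A \<beta> C b q = - \<beta> q - C * min b (min (1 - b) (1 - q))"

definition t_M :: "(real \<Rightarrow> real) \<Rightarrow> real \<Rightarrow> real \<Rightarrow> real" where
  "t_M \<beta> C p = (if \<beta> 1 < C * (1 - p) then \<beta> 1 / C else 1/2)"

definition pi_A0 :: "(real \<Rightarrow> real) \<Rightarrow> real \<Rightarrow> real \<Rightarrow> real \<Rightarrow> real" where
  "pi_A0 \<beta> C p b = (if b \<in> {t_M \<beta> C p <..< 1 - t_M \<beta> C p} then 1 else p)"

end

theory Submission
  imports Defs
begin

theorem theorem1:
  fixes \<beta> :: "real \<Rightarrow> real" and C p :: real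
  assumes C_pos: "C > 0"
    and p_range: "1/2 \<le> p" "p < 1"
    and beta_nonneg: "\<forall>q\<in>{1/2..1}. \<beta> q \<ge> 0"
    and beta_mono: "mono_on {1/2..1} \<beta>"
    and beta_cont: "continuous_on {1/2..1} \<beta>"
    and beta_concave: "concave_on {1/2..1} \<beta>"
    and beta_p: "\<beta> p = 0"
  shows "\<forall>b\<in>{0..1}. is_arg_max (r_A \<beta> C b) (\<lambda>q. q \<in> {1/2..1}) (pi_A0 \<beta> C p b)"
proof
  fix b :: real assume b: "b \<in> {0..1}"
  define m where "m = min b (1 - b)"
  have m0: "m \<ge> 0" using b by (auto simp: m_def)
  have rq: "r_A \<beta> C b q = - \<beta> q - C * min m (1 - q)" for q
    by (simp add: r_A_def m_def min.assoc)
  have r1: "r_A \<beta> C b 1 = - \<beta> 1" using rq m0 by simp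
  have rp: "r_A \<beta> C b p = - C * min m (1 - p)" using rq beta_p by simp
  have b1: "\<beta> 1 \<ge> 0" using beta_nonneg by auto
  have dom: "r_A \<beta> C b q \<le> max (r_A \<beta> C b p) (r_A \<beta> C b 1)" if q: "q \<in> {1/2..1}" for q
  proof (cases "q \<le> p")
    case True
    have "\<beta> q \<ge> 0" using q beta_nonneg by auto
    moreover have "min m (1 - q) \<ge> min m (1 - p)" using True by auto
    moreover have "C * min m (1 - q) \<ge> C * min m (1 - p)"
      using C_pos \<open>min m (1 - q) \<ge> min m (1 - p)\<close> by (simp add: mult_left_mono)
    ultimately have "r_A \<beta> C b q \<le> r_A \<beta> C b p"
      unfolding rq using beta_p by linarith
    then show ?thesis by simp
  next
    case False
    define l where "l = (q - p) / (1 - p)"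
    have l0: "0 \<le> l" "l \<le> 1" using False q p_range by (auto simp: l_def field_simps)
    have lq: "l * (1 - p) = q - p" using p_range by (simp add: l_def)
    have qeq: "q = (1 - l) * p + l * 1" using lq by (simp add: algebra_simps)
    have "\<beta> ((1 - l) *\<^sub>R p + l *\<^sub>R 1) \<ge> (1 - l) * \<beta> p + l * \<beta> 1"
      by (rule concave_onD[OF beta_concave]) (use l0 p_range in auto)
    hence bq: "\<beta> q \<ge> l * \<beta> 1" using qeq beta_p by simp
    have oq: "1 - q = (1 - l) * (1 - p)" using qeq by (simp add: algebra_simps)
    have "min m (1 - q) \<ge> (1 - l) * min m (1 - p)"
    proof -
      have "(1 - l) * min m (1 - p) \<le> (1 - l) * m" using l0 by (intro mult_left_mono) auto
      also have "\<dots> \<le> m" using l0 m0 by (simp add: mult_left_le_one_le)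
      finally have A: "(1 - l) * min m (1 - p) \<le> m" .
      have "(1 - l) * min m (1 - p) \<le> (1 - l) * (1 - p)" using l0 by (intro mult_left_mono) auto
      with A oq show ?thesis by simp
    qed
    hence "C * min m (1 - q) \<ge> C * ((1 - l) * min m (1 - p))" using C_pos by simp
    hence "r_A \<beta> C b q \<le> l * r_A \<beta> C b 1 + (1 - l) * r_A \<beta> C b p"
      unfolding r1 rp rq[of q] using bq by (simp add: algebra_simps)
    also have "\<dots> \<le> l * max (r_A \<beta> C b p) (r_A \<beta> C b 1) + (1 - l) * max (r_A \<beta> C b p) (r_A \<beta> C b 1)"
      using l0 by (intro add_mono mult_left_mono) auto
    also have "\<dots> = max (r_A \<beta> C b p) (r_A \<beta> C b 1)" by (simp add: algebra_simps)
    finally show ?thesis .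
  qed
  have best: "max (r_A \<beta> C b p) (r_A \<beta> C b 1) \<le> r_A \<beta> C b (pi_A0 \<beta> C p b)"
  proof (cases "\<beta> 1 < C * (1 - p)")
    case True
    hence t: "t_M \<beta> C p = \<beta> 1 / C" by (simp add: t_M_def)
    have tl: "\<beta> 1 / C < 1 - p" using True C_pos by (simp add: field_simps)
    show ?thesis
    proof (cases "b \<in> {t_M \<beta> C p <..< 1 - t_M \<beta> C p}")
      case True
      hence "m > \<beta> 1 / C" using t by (auto simp: m_def)
      hence "C * m > \<beta> 1" using C_pos by (simp add: field_simps)
      hence "C * min m (1 - p) \<ge> \<beta> 1" using \<open>\<beta> 1 < C * (1 - p)\<close> by (simp add: min_def)
      then show ?thesis using True r1 rp by (simp add: pi_A0_def)
    next
      case False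
      hence "m \<le> \<beta> 1 / C" using t by (auto simp: m_def)
      hence "C * m \<le> \<beta> 1" using C_pos by (simp add: field_simps)
      hence "C * min m (1 - p) \<le> \<beta> 1" using C_pos by (meson C_pos less_imp_le min.cobounded1 mult_left_mono order_trans)
      moreover have "pi_A0 \<beta> C p b = p" using False unfolding pi_A0_def by presburger
      ultimately show ?thesis using r1 rp by simp
    qed
  next
    case False
    hence "t_M \<beta> C p = 1/2" by (simp add: t_M_def)
    hence "pi_A0 \<beta> C p b = p" by (simp add: pi_A0_def)
    moreover have "C * min m (1 - p) \<le> C * (1 - p)" using C_pos
      by (simp add: mult_left_mono)
    hence "C * min m (1 - p) \<le> \<beta> 1" using False by linarith
    ultimately show ?thesis using r1 rp by simp
  qed
  have inP: "pi_A0 \<beta> C p b \<in> {1/2..1}" using p_range by (simp add: pi_A0_def)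
  show "is_arg_max (r_A \<beta> C b) (\<lambda>q. q \<in> {1/2..1}) (pi_A0 \<beta> C p b)"
    unfolding is_arg_max_def using inP dom best by (meson not_le order_trans)
qed

end
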